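(* Let $X$ be an $X$-set parameter and let $G$ be a graph of order $n$. If $\mathscr{X}^{\rm TAR}_k(G)$ is connected for some $k>\overline{X}(G)$, then $\mathscr{X}^{\rm TAR}_{k'}(G)$ is connected for every $k'=k,\dots,n$ and $x_0(G)\le k$. If $\mathscr{X}^{\rm TAR}_{\overline{X}(G)+1}(G)$ is connected, then $x_0(G)=\overline{X}(G)+1$. If $\underline{x_0}(G)>\overline{X}(G)$, then $\underline{x_0}(G)=x_0(G)$.
   Context: All graphs are simple, finite, with nonempty vertex set. An $X$-set parameter is a graph parameter $X(G)$ defined as the minimum cardinality of an $X$-set of $G$, where the $X$-sets of each graph are subsets of its vertex set determined by some property satisfying: (1) supersets (within $V(G)$) of $X$-sets are $X$-sets; (2) the empty set is never an $X$-set; (3) an $X$-set of a disconnected graph is the union of an $X$-set of each component; (4) if $G$ has no isolated vertices, every set of $|V(G)|-1$ vertices is an $X$-set. The $X$-TAR graph $\mathscr{X}^{\rm TAR}(G)$ has as vertices all $X$-sets of $G$, with $S_1,S_2$ adjacent iff $|S_1\ominus S_2|=1$; $\mathscr{X}^{\rm TAR}_k(G)$ is its subgraph induced by the $X$-sets of cardinality at most $k$. $\overline{X}(G)$ is the maximum cardinality of a minimal (under inclusion) $X$-set of $G$. $\underline{x_0}(G)$ is the least $k$ such that $\mathscr{X}^{\rm TAR}_k(G)$ is connected; $x_0(G)$ is the least $k$ such that $\mathscr{X}^{\rm TAR}_i(G)$ is connected for all $k\le i\le |V(G)|$. *)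

theory Defs
  imports Main
begin

definition is_graph :: "'a set \<Rightarrow> ('a \<times> 'a) set \<Rightarrow> bool" where
  "is_graph V E \<longleftrightarrow> finite V \<and> V \<noteq> {} \<and> E \<subseteq> V \<times> V \<and> sym E \<and> (\<forall>v. (v, v) \<notin> E)"

definition connected_on :: "'b set \<Rightarrow> ('b \<times> 'b) set \<Rightarrow> bool" where
  "connected_on W R \<longleftrightarrow> W \<noteq> {} \<and> (\<forall>a\<in>W. \<forall>b\<in>W. (a, b) \<in> (R \<inter> W \<times> W)\<^sup>*)"

definition components :: "'a set \<Rightarrow> ('a \<times> 'a) set \<Rightarrow> 'a set set" where
  "components V E = {{w \<in> V. (v, w) \<in> (E \<inter> V \<times> V)\<^sup>*} | v. v \<in> V}"

definition isolated :: "'a set \<Rightarrow> ('a \<times> 'a) set \<Rightarrow> 'a \<Rightarrow> bool" where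
  "isolated V E v \<longleftrightarrow> v \<in> V \<and> (\<forall>w\<in>V. (v, w) \<notin> E)"

definition X_set_param :: "('a set \<Rightarrow> ('a \<times> 'a) set \<Rightarrow> 'a set set) \<Rightarrow> bool" where
  "X_set_param Xs \<longleftrightarrow>
     (\<forall>V E. is_graph V E \<longrightarrow>
        Xs V E \<subseteq> Pow V
      \<and> (\<forall>S T. S \<in> Xs V E \<and> S \<subseteq> T \<and> T \<subseteq> V \<longrightarrow> T \<in> Xs V E)
      \<and> {} \<notin> Xs V E
      \<and> (\<not> connected_on V E \<longrightarrow>
           (\<forall>S. S \<in> Xs V E \<longleftrightarrow>
                 S \<subseteq> V \<and> (\<forall>C\<in>components V E. S \<inter> C \<in> Xs C (E \<inter> C \<times> C))))
      \<and> ((\<forall>v\<in>V. \<not> isolated V E v) \<longrightarrow>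
           (\<forall>S. S \<subseteq> V \<and> card S = card V - 1 \<longrightarrow> S \<in> Xs V E)))"

definition TAR_vertices :: "('a set \<Rightarrow> ('a \<times> 'a) set \<Rightarrow> 'a set set) \<Rightarrow> 'a set \<Rightarrow> ('a \<times> 'a) set \<Rightarrow> nat \<Rightarrow> 'a set set" where
  "TAR_vertices Xs V E k = {S \<in> Xs V E. card S \<le> k}"

definition TAR_adj :: "('a set \<times> 'a set) set" where
  "TAR_adj = {(S1, S2). card (sym_diff S1 S2) = 1}"

definition TAR_connected :: "('a set \<Rightarrow> ('a \<times> 'a) set \<Rightarrow> 'a set set) \<Rightarrow> 'a set \<Rightarrow> ('a \<times> 'a) set \<Rightarrow> nat \<Rightarrow> bool" where
  "TAR_connected Xs V E k \<longleftrightarrow> connected_on (TAR_vertices Xs V E k) TAR_adj"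

definition minimal_X_set :: "('a set \<Rightarrow> ('a \<times> 'a) set \<Rightarrow> 'a set set) \<Rightarrow> 'a set \<Rightarrow> ('a \<times> 'a) set \<Rightarrow> 'a set \<Rightarrow> bool" where
  "minimal_X_set Xs V E S \<longleftrightarrow> S \<in> Xs V E \<and> (\<forall>T. T \<subset> S \<longrightarrow> T \<notin> Xs V E)"

definition X_upper :: "('a set \<Rightarrow> ('a \<times> 'a) set \<Rightarrow> 'a set set) \<Rightarrow> 'a set \<Rightarrow> ('a \<times> 'a) set \<Rightarrow> nat" where
  "X_upper Xs V E = Max ({card S | S. minimal_X_set Xs V E S} \<union> {0})"

definition x0_lower :: "('a set \<Rightarrow> ('a \<times> 'a) set \<Rightarrow> 'a set set) \<Rightarrow> 'a set \<Rightarrow> ('a \<times> 'a) set \<Rightarrow> nat" where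
  "x0_lower Xs V E = (LEAST k. TAR_connected Xs V E k)"

definition x0 :: "('a set \<Rightarrow> ('a \<times> 'a) set \<Rightarrow> 'a set set) \<Rightarrow> 'a set \<Rightarrow> ('a \<times> 'a) set \<Rightarrow> nat" where
  "x0 Xs V E = (LEAST k. \<forall>i. k \<le> i \<and> i \<le> card V \<longrightarrow> TAR_connected Xs V E i)"

end

theory Submission
  imports Defs
begin

lemma axs:
  assumes "X_set_param Xs" "is_graph V E"
  shows ax_sub: "Xs V E \<subseteq> Pow V"
    and ax_up: "\<And>S T. S \<in> Xs V E \<Longrightarrow> S \<subseteq> T \<Longrightarrow> T \<subseteq> V \<Longrightarrow> T \<in> Xs V E"
    and ax_ne: "{} \<notin> Xs V E"
    and ax_comp: "\<And>S. \<not> connected_on V E \<Longrightarrow> S \<in> Xs V E \<longleftrightarrow> S \<subseteq> V \<and> (\<forall>C\<in>components V E. S \<inter> C \<in> Xs C (E \<inter> C \<times> C))"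
    and ax_iso: "\<And>S. (\<forall>v\<in>V. \<not> isolated V E v) \<Longrightarrow> S \<subseteq> V \<Longrightarrow> card S = card V - 1 \<Longrightarrow> S \<in> Xs V E"
  using assms unfolding X_set_param_def by blast+

lemma sd_sym: "(A,B) \<in> TAR_adj \<Longrightarrow> (B,A) \<in> TAR_adj"
  unfolding TAR_adj_def by (auto simp: Un_commute)

lemma sym_TAR_adj: "sym TAR_adj" by (auto intro: symI sd_sym)

lemma sd_cases_aux:
  assumes x: "(A - B) \<union> (B - A) = {x}"
  shows "B \<subset> A \<or> A \<subset> B"
proof -
  have h: "\<And>y. (y \<in> A \<and> y \<notin> B \<or> y \<in> B \<and> y \<notin> A) \<longleftrightarrow> y = x"
    using x by (simp add: set_eq_iff)
  show ?thesis
  proof (cases "x \<in> A")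
    case True
    then have "x \<notin> B" using h by metis
    moreover have "B \<subseteq> A"
    proof
      fix y assume y: "y \<in> B"
      show "y \<in> A"
      proof (rule ccontr)
        assume ny: "y \<notin> A"
        then have "y = x" using h y by metis
        then show False using True ny by simp
      qed
    qed
    ultimately show ?thesis using True by blast
  next
    case False
    then have "x \<in> B" using h by metis
    moreover have "A \<subseteq> B"
    proof
      fix y assume y: "y \<in> A"
      show "y \<in> B"
      proof (rule ccontr)
        assume ny: "y \<notin> B"
        then have "y = x" using h y by metis
        then show False using False y by simp
      qed
    qed
    ultimately show ?thesis using False by blast
  qed
qed

lemma sd_cases:
  assumes "(A,B) \<in> TAR_adj"
  shows "B \<subset> A \<or> A \<subset> B"
proof -
  have "card ((A - B) \<union> (B - A)) = 1" using assms unfolding TAR_adj_def by simp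
  then obtain x where x: "(A - B) \<union> (B - A) = {x}" by (rule card_1_singletonE)
  then show ?thesis by (rule sd_cases_aux)
qed

lemma connected_extend:
  assumes "connected_on W R" "W \<subseteq> W'" "sym R"
    and "\<And>x. x \<in> W' \<Longrightarrow> \<exists>y\<in>W. x = y \<or> (x, y) \<in> R"
  shows "connected_on W' R"
  unfolding connected_on_def
proof (intro conjI ballI)
  show "W' \<noteq> {}" using assms(1,2) unfolding connected_on_def by blast
  fix a b assume a: "a \<in> W'" and b: "b \<in> W'"
  let ?R = "R \<inter> W' \<times> W'"
  have symR: "sym ?R" using assms(3) by (auto simp: sym_def)
  have mono: "(R \<inter> W \<times> W)\<^sup>* \<subseteq> ?R\<^sup>*" using assms(2) by (intro rtrancl_mono) auto
  obtain a' where a': "a' \<in> W" "a = a' \<or> (a, a') \<in> R" using assms(4)[OF a] by blast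
  obtain b' where b': "b' \<in> W" "b = b' \<or> (b, b') \<in> R" using assms(4)[OF b] by blast
  have 1: "(a, a') \<in> ?R\<^sup>*" using a' a assms(2) by (auto intro: r_into_rtrancl)
  have 2: "(b, b') \<in> ?R\<^sup>*" using b' b assms(2) by (auto intro: r_into_rtrancl)
  have 3: "(b', b) \<in> ?R\<^sup>*" using 2 symR by (meson sym_rtrancl symD)
  have "(a', b') \<in> ?R\<^sup>*" using assms(1) a' b' mono unfolding connected_on_def by blast
  then show "(a, b) \<in> ?R\<^sup>*" using 1 3 by (meson rtrancl_trans)
qed

lemma comp_eq:
  assumes "sym R" "(u,x) \<in> R\<^sup>*" "(v,x) \<in> R\<^sup>*"
  shows "{w \<in> V. (u, w) \<in> R\<^sup>*} = {w \<in> V. (v, w) \<in> R\<^sup>*}"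
proof -
  have s: "sym (R\<^sup>*)" using assms(1) by (rule sym_rtrancl)
  have "(x,v) \<in> R\<^sup>*" using s assms(3) by (meson symD)
  then have uv: "(u,v) \<in> R\<^sup>*" using assms(2) by (meson rtrancl_trans)
  then have vu: "(v,u) \<in> R\<^sup>*" using s by (meson symD)
  show ?thesis using uv vu by (auto intro: rtrancl_trans)
qed

locale xctx =
  fixes Xs :: "'a set \<Rightarrow> ('a \<times> 'a) set \<Rightarrow> 'a set set" and V :: "'a set" and E :: "('a \<times> 'a) set"
  assumes P: "X_set_param Xs" and G: "is_graph V E"
begin

lemma fin: "finite V" using G unfolding is_graph_def by blast

lemma sub: "S \<in> Xs V E \<Longrightarrow> S \<subseteq> V" using ax_sub[OF P G] by blast

lemma finS: "S \<in> Xs V E \<Longrightarrow> finite S" using sub fin finite_subset by blast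

lemma minimal_exists: "S \<in> Xs V E \<Longrightarrow> \<exists>M\<subseteq>S. minimal_X_set Xs V E M"
proof (induction "card S" arbitrary: S rule: less_induct)
  case less
  show ?case
  proof (cases "minimal_X_set Xs V E S")
    case True then show ?thesis by blast
  next
    case False
    then obtain T where T: "T \<subset> S" "T \<in> Xs V E" using less.prems unfolding minimal_X_set_def by blast
    have "finite S" using less.prems finS by blast
    then have "card T < card S" using T by (simp add: psubset_card_mono)
    from less.hyps[OF this T(2)] T(1) show ?thesis by blast
  qed
qed

lemma fin_cards: "finite ({card S | S. minimal_X_set Xs V E S} \<union> {0})"
proof -
  have "{card S | S. minimal_X_set Xs V E S} \<subseteq> {..card V}"
    using sub fin by (auto simp: minimal_X_set_def intro: card_mono)
  then show ?thesis using finite_subset by blast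
qed

lemma le_upper: "minimal_X_set Xs V E M \<Longrightarrow> card M \<le> X_upper Xs V E"
  unfolding X_upper_def using fin_cards by (intro Max_ge) auto

lemma upper_attained:
  assumes "S \<in> Xs V E"
  shows "\<exists>M. minimal_X_set Xs V E M \<and> card M = X_upper Xs V E"
proof -
  obtain M0 where M0: "minimal_X_set Xs V E M0" using minimal_exists assms by blast
  have H: "X_upper Xs V E \<in> {card S | S. minimal_X_set Xs V E S} \<union> {0}"
    unfolding X_upper_def using fin_cards by (intro Max_in) auto
  show ?thesis
  proof (cases "X_upper Xs V E \<in> {card S | S. minimal_X_set Xs V E S}")
    case True
    then obtain M where "minimal_X_set Xs V E M" "X_upper Xs V E = card M" by blast
    then show ?thesis by metis
  next
    case False
    then have "X_upper Xs V E = 0" using H by blast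
    then have "card M0 = 0" using le_upper[OF M0] by simp
    moreover have "finite M0" using M0 finS unfolding minimal_X_set_def by blast
    ultimately have "M0 = {}" by simp
    then show ?thesis using M0 ax_ne[OF P G] unfolding minimal_X_set_def by simp
  qed
qed

lemma conn_step:
  assumes "X_upper Xs V E < k" "TAR_connected Xs V E k"
  shows "TAR_connected Xs V E (Suc k)"
  unfolding TAR_connected_def
proof (rule connected_extend[OF assms(2)[unfolded TAR_connected_def]])
  show "TAR_vertices Xs V E k \<subseteq> TAR_vertices Xs V E (Suc k)" by (auto simp: TAR_vertices_def)
  show "sym TAR_adj" by (rule sym_TAR_adj)
  fix S assume S: "S \<in> TAR_vertices Xs V E (Suc k)"
  show "\<exists>y\<in>TAR_vertices Xs V E k. S = y \<or> (S, y) \<in> TAR_adj"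
  proof (cases "card S \<le> k")
    case True then show ?thesis using S by (auto simp: TAR_vertices_def)
  next
    case False
    then have cS: "card S = Suc k" using S by (auto simp: TAR_vertices_def)
    have SX: "S \<in> Xs V E" using S by (auto simp: TAR_vertices_def)
    have "\<not> minimal_X_set Xs V E S" using le_upper cS assms(1) by fastforce
    then obtain T where T: "T \<subset> S" "T \<in> Xs V E" using SX unfolding minimal_X_set_def by blast
    then obtain v where v: "v \<in> S" "v \<notin> T" by blast
    have fS: "finite S" using SX finS by blast
    have "T \<subseteq> S - {v}" using T v by blast
    moreover have "S - {v} \<subseteq> V" using SX sub by blast
    ultimately have X: "S - {v} \<in> Xs V E" using ax_up[OF P G T(2)] by blast
    have c: "card (S - {v}) = k" using cS v fS by simp
    have "(S - (S - {v})) \<union> ((S - {v}) - S) = {v}" using v by auto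
    then have "(S, S - {v}) \<in> TAR_adj" unfolding TAR_adj_def by simp
    then show ?thesis using X c by (auto simp: TAR_vertices_def)
  qed
qed

lemma conn_mono:
  assumes "X_upper Xs V E < k" "TAR_connected Xs V E k" "k \<le> k'"
  shows "TAR_connected Xs V E k'"
  using assms(3)
proof (induction k' rule: dec_induct)
  case base then show ?case using assms(2) .
next
  case (step n)
  have "X_upper Xs V E < n" using assms(1) step.hyps by linarith
  from conn_step[OF this step.IH] show ?case .
qed

lemma conn_cap:
  assumes "TAR_connected Xs V E k"
  shows "TAR_connected Xs V E (min k (card V))"
proof (cases "k \<le> card V")
  case True then show ?thesis using assms by simp
next
  case False
  have "TAR_vertices Xs V E k = TAR_vertices Xs V E (card V)"
    using False sub fin by (auto simp: TAR_vertices_def intro: card_mono order_trans)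
  then show ?thesis using assms False by (simp add: TAR_connected_def)
qed

lemma only_M:
  assumes conn: "TAR_connected Xs V E (X_upper Xs V E)"
    and M: "minimal_X_set Xs V E M" "card M = X_upper Xs V E"
    and S: "S \<in> TAR_vertices Xs V E (X_upper Xs V E)"
  shows "S = M"
proof (rule ccontr)
  assume ne: "S \<noteq> M"
  let ?W = "TAR_vertices Xs V E (X_upper Xs V E)"
  have MW: "M \<in> ?W" using M by (auto simp: TAR_vertices_def minimal_X_set_def)
  have "(M, S) \<in> (TAR_adj \<inter> ?W \<times> ?W)\<^sup>*" using conn MW S unfolding TAR_connected_def connected_on_def by blast
  then obtain S1 where S1: "(M, S1) \<in> TAR_adj" "S1 \<in> ?W"
    by (cases rule: converse_rtranclE) (use ne in blast)+
  have S1X: "S1 \<in> Xs V E" "card S1 \<le> card M" using S1(2) M(2) by (auto simp: TAR_vertices_def)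
  have fS1: "finite S1" using S1X finS by blast
  from sd_cases[OF S1(1)] show False
  proof
    assume "S1 \<subset> M" then show False using M(1) S1X unfolding minimal_X_set_def by blast
  next
    assume "M \<subset> S1" then have "card M < card S1" using fS1 psubset_card_mono by blast
    then show False using S1X by linarith
  qed
qed

lemma structural:
  assumes N: "X_upper Xs V E + 1 \<le> card V"
    and M: "minimal_X_set Xs V E M" "card M = X_upper Xs V E"
    and uniq: "\<And>M'. minimal_X_set Xs V E M' \<Longrightarrow> M' = M"
  shows False
proof -
  have MX: "M \<in> Xs V E" using M unfolding minimal_X_set_def by blast
  have contain: "M \<subseteq> S" if "S \<in> Xs V E" for S using minimal_exists[OF that] uniq by blast
  have MV: "M \<subseteq> V" using MX sub by blast
  have "M \<noteq> V" using M(2) N by auto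
  then obtain u where u: "u \<in> V" "u \<notin> M" using MV by blast
  have "M \<noteq> {}" using MX ax_ne[OF P G] by blast
  then obtain m where m: "m \<in> M" by blast
  have mV: "m \<in> V" using m MV by blast
  let ?R = "E \<inter> V \<times> V"
  have symE: "sym E" using G unfolding is_graph_def by blast
  have symR: "sym ?R" using symE by (auto simp: sym_def)
  show False
  proof (cases "connected_on V E")
    case True
    have noiso: "\<forall>v\<in>V. \<not> isolated V E v"
    proof (intro ballI notI)
      fix v assume v: "v \<in> V" "isolated V E v"
      obtain w where w: "w \<in> V" "w \<noteq> v"
        by (cases "v = u") (use u m mV in blast)+
      have "(v, w) \<in> ?R\<^sup>*" using True v w unfolding connected_on_def by blast
      then show False by (cases rule: converse_rtranclE) (use w v in \<open>auto simp: isolated_def\<close>)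
    qed
    have "card (V - {m}) = card V - 1" using mV fin by simp
    then have "V - {m} \<in> Xs V E" using ax_iso[OF P G noiso] by blast
    then show False using contain m by blast
  next
    case False
    define C where "C = {w \<in> V. (u, w) \<in> ?R\<^sup>*}"
    have uC: "u \<in> C" using u unfolding C_def by simp
    have Ccomp: "C \<in> components V E" unfolding C_def components_def using u by blast
    have CV: "C \<subseteq> V" unfolding C_def by blast
    have fC: "finite C" using CV fin finite_subset by blast
    have gC: "is_graph C (E \<inter> C \<times> C)"
      unfolding is_graph_def
    proof (intro conjI)
      show "sym (E \<inter> C \<times> C)" using symE unfolding sym_def by blast
      show "\<forall>v. (v, v) \<notin> E \<inter> C \<times> C" using G unfolding is_graph_def by blast
    qed (use fC uC in blast)+
    have compX: "\<And>S C'. S \<in> Xs V E \<Longrightarrow> C' \<in> components V E \<Longrightarrow> S \<inter> C' \<in> Xs C' (E \<inter> C' \<times> C')"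
      using ax_comp[OF P G False] by blast
    have MC: "M \<inter> C \<in> Xs C (E \<inter> C \<times> C)" using compX[OF MX Ccomp] .
    have noiso: "\<forall>z\<in>C. \<not> isolated C (E \<inter> C \<times> C) z"
    proof (intro ballI notI)
      fix z assume z: "z \<in> C" "isolated C (E \<inter> C \<times> C) z"
      have noR: "(z, y) \<notin> ?R" for y
      proof
        assume zy: "(z, y) \<in> ?R"
        have "(u, z) \<in> ?R\<^sup>*" using z unfolding C_def by blast
        then have "(u, y) \<in> ?R\<^sup>*" using zy by (meson rtrancl.rtrancl_into_rtrancl)
        then have "y \<in> C" using zy unfolding C_def by blast
        then show False using z zy unfolding isolated_def by blast
      qed
      have "(u, z) \<in> ?R\<^sup>*" using z unfolding C_def by blast
      then have "(z, u) \<in> ?R\<^sup>*" using sym_rtrancl[OF symR] by (meson symD)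
      then have zu: "z = u" by (cases rule: converse_rtranclE) (use noR in blast)+
      have "C = {u}"
      proof
        show "C \<subseteq> {u}"
        proof
          fix w assume "w \<in> C"
          then have "(u, w) \<in> ?R\<^sup>*" unfolding C_def by blast
          then show "w \<in> {u}" by (cases rule: converse_rtranclE) (use noR zu in blast)+
        qed
      qed (use uC in blast)
      then have "M \<inter> C = {}" using u by blast
      then show False using MC ax_ne[OF P gC] by simp
    qed
    have "M \<inter> C \<noteq> {}" using MC ax_ne[OF P gC] by auto
    then obtain w where w: "w \<in> M" "w \<in> C" by blast
    define S where "S = (M - C) \<union> (C - {w})"
    have SV: "S \<subseteq> V" using MV CV unfolding S_def by blast
    have "S \<inter> C' \<in> Xs C' (E \<inter> C' \<times> C')" if C': "C' \<in> components V E" for C'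
    proof (cases "C' = C")
      case True
      have fC: "finite C" using CV fin finite_subset by blast
      have "card (C - {w}) = card C - 1" using fC w by simp
      then have "C - {w} \<in> Xs C (E \<inter> C \<times> C)" using ax_iso[OF P gC noiso] by blast
      moreover have "S \<inter> C = C - {w}" unfolding S_def by blast
      ultimately show ?thesis using True by simp
    next
      case False
      obtain v' where v': "v' \<in> V" "C' = {x \<in> V. (v', x) \<in> ?R\<^sup>*}" using C' unfolding components_def by blast
      have disj: "C \<inter> C' = {}"
      proof (rule ccontr)
        assume "C \<inter> C' \<noteq> {}"
        then obtain x where "x \<in> C" "x \<in> C'" by blast
        then have "(u, x) \<in> ?R\<^sup>*" "(v', x) \<in> ?R\<^sup>*" using v' unfolding C_def by auto
        from comp_eq[OF symR this, of V] have "C = C'" using v' unfolding C_def by simp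
        then show False using False by simp
      qed
      have "S \<inter> C' = M \<inter> C'" using disj unfolding S_def by blast
      then show ?thesis using compX[OF MX C'] by simp
    qed
    then have "S \<in> Xs V E" using ax_comp[OF P G False] SV by blast
    then have "M \<subseteq> S" by (rule contain)
    then show False using w unfolding S_def by blast
  qed
qed

end

theorem proposition3p1:
  fixes Xs :: "'a set \<Rightarrow> ('a \<times> 'a) set \<Rightarrow> 'a set set"
    and V :: "'a set" and E :: "('a \<times> 'a) set"
  assumes "X_set_param Xs"
    and "is_graph V E"
  shows "(\<forall>k. X_upper Xs V E < k \<and> TAR_connected Xs V E k \<longrightarrow>
            (\<forall>k'. k \<le> k' \<and> k' \<le> card V \<longrightarrow> TAR_connected Xs V E k') \<and> x0 Xs V E \<le> k)
       \<and> (X_upper Xs V E + 1 \<le> card V \<and> TAR_connected Xs V E (X_upper Xs V E + 1) \<longrightarrow>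
            x0 Xs V E = X_upper Xs V E + 1)
       \<and> ((\<exists>k. TAR_connected Xs V E k) \<and> x0_lower Xs V E > X_upper Xs V E \<longrightarrow>
            x0_lower Xs V E = x0 Xs V E)"
proof -
  interpret xctx Xs V E using assms by unfold_locales
  let ?N = "X_upper Xs V E"
  let ?P = "\<lambda>k. \<forall>i. k \<le> i \<and> i \<le> card V \<longrightarrow> TAR_connected Xs V E i"
  have part1: "?P k \<and> x0 Xs V E \<le> k" if "?N < k" "TAR_connected Xs V E k" for k
  proof -
    have Pk: "?P k" using conn_mono[OF that] by blast
    then have "x0 Xs V E \<le> k" unfolding x0_def by (rule Least_le)
    with Pk show ?thesis by blast
  qed
  have part2: "x0 Xs V E = ?N + 1" if A: "?N + 1 \<le> card V" "TAR_connected Xs V E (?N + 1)"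
  proof (rule ccontr)
    assume ne: "x0 Xs V E \<noteq> ?N + 1"
    have le: "x0 Xs V E \<le> ?N + 1" using part1[of "?N + 1"] A by simp
    have PN: "?P (?N + 1)" using part1[of "?N + 1"] A by simp
    have Px0: "?P (x0 Xs V E)" unfolding x0_def using PN by (rule LeastI)
    have connN: "TAR_connected Xs V E ?N" using Px0 le ne A(1) by simp
    then obtain S where "S \<in> TAR_vertices Xs V E ?N"
      unfolding TAR_connected_def connected_on_def by blast
    then have "S \<in> Xs V E" by (simp add: TAR_vertices_def)
    then obtain M where M: "minimal_X_set Xs V E M" "card M = ?N" using upper_attained by blast
    have uniq: "M' = M" if "minimal_X_set Xs V E M'" for M'
    proof (rule only_M[OF connN M])
      show "M' \<in> TAR_vertices Xs V E ?N" using that le_upper[OF that]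
        by (simp add: TAR_vertices_def minimal_X_set_def)
    qed
    show False using structural[OF A(1) M uniq] .
  qed
  have part3: "x0_lower Xs V E = x0 Xs V E"
    if B: "\<exists>k. TAR_connected Xs V E k" "x0_lower Xs V E > ?N"
  proof -
    let ?L = "x0_lower Xs V E"
    obtain k where k: "TAR_connected Xs V E k" using B(1) by blast
    have cL: "TAR_connected Xs V E ?L" unfolding x0_lower_def using k by (rule LeastI)
    have "?L \<le> min k (card V)" unfolding x0_lower_def using conn_cap[OF k] by (rule Least_le)
    then have Lle: "?L \<le> card V" by simp
    have PL: "?P ?L" and x0le: "x0 Xs V E \<le> ?L" using part1[OF B(2) cL] by blast+
    have Px0: "?P (x0 Xs V E)" unfolding x0_def using PL by (rule LeastI)
    then have "TAR_connected Xs V E (x0 Xs V E)" using x0le Lle by simp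
    then have "?L \<le> x0 Xs V E" unfolding x0_lower_def by (rule Least_le)
    then show ?thesis using x0le by simp
  qed
  have c1: "\<forall>k. X_upper Xs V E < k \<and> TAR_connected Xs V E k \<longrightarrow>
            (\<forall>k'. k \<le> k' \<and> k' \<le> card V \<longrightarrow> TAR_connected Xs V E k') \<and> x0 Xs V E \<le> k"
  proof (intro allI impI)
    fix k assume "X_upper Xs V E < k \<and> TAR_connected Xs V E k"
    then have "?P k \<and> x0 Xs V E \<le> k" using part1 by blast
    then show "(\<forall>k'. k \<le> k' \<and> k' \<le> card V \<longrightarrow> TAR_connected Xs V E k') \<and> x0 Xs V E \<le> k" by simp
  qed
  have c2: "X_upper Xs V E + 1 \<le> card V \<and> TAR_connected Xs V E (X_upper Xs V E + 1) \<longrightarrow>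
            x0 Xs V E = X_upper Xs V E + 1"
    using part2 by blast
  have c3: "(\<exists>k. TAR_connected Xs V E k) \<and> x0_lower Xs V E > X_upper Xs V E \<longrightarrow>
            x0_lower Xs V E = x0 Xs V E"
    using part3 by blast
  show ?thesis by (rule conjI[OF c1 conjI[OF c2 c3]])
qed

end
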